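(* Let $\kappa\in\mathbb{K}$, let $(\mathfrak{g},[-,-,-]_\mathfrak{g},\alpha_\mathfrak{g})$ and $(\mathfrak{h},[-,-,-]_\mathfrak{h},\alpha_\mathfrak{h})$ be regular Hom-Lie triple systems (i.e. $\alpha_\mathfrak{g},\alpha_\mathfrak{h}$ are bijective), $\theta$ an action of $\mathfrak{g}$ on $\mathfrak{h}$, and $\mathcal{A}:\mathfrak{h}\to\mathfrak{g}$ a $\kappa$-weighted $\mathcal{O}$-operator with respect to $\theta$. Let $a,b\in\mathfrak{g}$ satisfy $\alpha_\mathfrak{g}(a)=a$, $\alpha_\mathfrak{g}(b)=b$, and define $\Im(a,b):\mathfrak{h}\to\mathfrak{g}$ by $$\Im(a,b)v=\mathcal{A}\big(D(a,b)\alpha_\mathfrak{h}^{-1}(v)\big)-[a,b,\mathcal{A}\alpha_\mathfrak{h}^{-1}(v)]_\mathfrak{g}.$$ Then $\Im(a,b)$ is a 1-cocycle of the Hom-Lie triple system $(\mathfrak{h},\{-,-,-\}_\mathcal{A},\alpha_\mathfrak{h})$ with coefficients in $(\mathfrak{g},\alpha_\mathfrak{g};\theta_\mathcal{A})$; that is, $\alpha_\mathfrak{g}\circ\Im(a,b)=\Im(a,b)\circ\alpha_\mathfrak{h}$ and for all $v_1,v_2,v_3\in\mathfrak{h}$, $$\theta_\mathcal{A}(v_2,v_3)\Im(a,b)v_1-\theta_\mathcal{A}(v_1,v_3)\Im(a,b)v_2+D_\mathcal{A}(v_1,v_2)\Im(a,b)v_3-\Im(a,b)\{v_1,v_2,v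_3\}_\mathcal{A}=0.$$
   Context: All vector spaces are over a field $\mathbb{K}$ of characteristic zero. A Hom-Lie triple system $(\mathfrak{g},[-,-,-]_\mathfrak{g},\alpha_\mathfrak{g})$ is a vector space with a trilinear map $[-,-,-]_\mathfrak{g}$ and a linear map $\alpha_\mathfrak{g}$ with $\alpha_\mathfrak{g}([x,y,z]_\mathfrak{g})=[\alpha_\mathfrak{g}(x),\alpha_\mathfrak{g}(y),\alpha_\mathfrak{g}(z)]_\mathfrak{g}$ such that for all $x,y,z,a,b$: $[x,y,z]_\mathfrak{g}+[y,x,z]_\mathfrak{g}=0$; $[x,y,z]_\mathfrak{g}+[z,x,y]_\mathfrak{g}+[y,z,x]_\mathfrak{g}=0$; $[\alpha_\mathfrak{g}(a),\alpha_\mathfrak{g}(b),[x,y,z]_\mathfrak{g}]_\mathfrak{g}=[[a,b,x]_\mathfrak{g},\alpha_\mathfrak{g}(y),\alpha_\mathfrak{g}(z)]_\mathfrak{g}+[\alpha_\mathfrak{g}(x),[a,b,y]_\mathfrak{g},\alpha_\mathfrak{g}(z)]_\mathfrak{g}+[\alpha_\mathfrak{g}(x),\alpha_\mathfrak{g}(y),[a,b,z]_\mathfrak{g}]_\mathfrak{g}$. A representation of $\mathfrak{g}$ on $(V,\beta)$ is a bilinear map $\theta:\mathfrak{g}\times\mathfrak{g}\to\mathrm{End}(V)$ such that, with $D(x,y)=\theta(y,x)-\theta(x,y)$, for all $x,y,a,b$: $\theta(\alpha_\mathfrak{g}(x),\alpha_\mathfrak{g}(y))\circ\beta=\beta\circ\theta(x,y)$;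 $\theta(\alpha_\mathfrak{g}(a),\alpha_\mathfrak{g}(b))\theta(x,y)-\theta(\alpha_\mathfrak{g}(y),\alpha_\mathfrak{g}(b))\theta(x,a)-\theta(\alpha_\mathfrak{g}(x),[y,a,b]_\mathfrak{g})\circ\beta+D(\alpha_\mathfrak{g}(y),\alpha_\mathfrak{g}(a))\theta(x,b)=0$; $\theta(\alpha_\mathfrak{g}(a),\alpha_\mathfrak{g}(b))D(x,y)-D(\alpha_\mathfrak{g}(x),\alpha_\mathfrak{g}(y))\theta(a,b)+\theta([x,y,a]_\mathfrak{g},\alpha_\mathfrak{g}(b))\circ\beta+\theta(\alpha_\mathfrak{g}(a),[x,y,b]_\mathfrak{g})\circ\beta=0$. An action of $\mathfrak{g}$ on a Hom-Lie triple system $(\mathfrak{h},[-,-,-]_\mathfrak{h},\alpha_\mathfrak{h})$ is a representation $\theta$ of $\mathfrak{g}$ on $(\mathfrak{h},\alpha_\mathfrak{h})$ such that for all $x,y\in\mathfrak{g}$, $u,v,w\in\mathfrak{h}$: $\theta(\alpha_\mathfrak{g}(x),\alpha_\mathfrak{g}(y))[u,v,w]_\mathfrak{h}=[\theta(x,y)u,\alpha_\mathfrak{h}(v),\alpha_\mathfrak{h}(w)]_\mathfrak{h}+[\alpha_\mathfrak{h}(u),\theta(x,y)v,\alpha_\mathfrak{h}(w)]_\mathfrak{h}+[\alpha_\mathfrak{h}(u),\alpha_\mathfrak{h}(v),\theta(x,y)w]_\mathfrak{h}$ and $\theta(\alpha_\mathfrak{g}(x),\alpha_\mathfrak{g}(y))[u,v,w]_\mathfrak{h}=[\alpha_\mathfrak{h}(u),\alpha_\mathfrak{h}(v),\theta(x,y)w]_\mathfrak{h}=0$.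 A $\kappa$-weighted $\mathcal{O}$-operator from $\mathfrak{h}$ to $\mathfrak{g}$ with respect to $\theta$ is a linear map $\mathcal{A}:\mathfrak{h}\to\mathfrak{g}$ with $\mathcal{A}\circ\alpha_\mathfrak{h}=\alpha_\mathfrak{g}\circ\mathcal{A}$ and $[\mathcal{A}u,\mathcal{A}v,\mathcal{A}w]_\mathfrak{g}=\mathcal{A}\big(D(\mathcal{A}u,\mathcal{A}v)w-\theta(\mathcal{A}u,\mathcal{A}w)v+\theta(\mathcal{A}v,\mathcal{A}w)u+\kappa[u,v,w]_\mathfrak{h}\big)$. For such $\mathcal{A}$: $\{u,v,w\}_\mathcal{A}=D(\mathcal{A}u,\mathcal{A}v)w-\theta(\mathcal{A}u,\mathcal{A}w)v+\theta(\mathcal{A}v,\mathcal{A}w)u+\kappa[u,v,w]_\mathfrak{h}$ makes $(\mathfrak{h},\{-,-,-\}_\mathcal{A},\alpha_\mathfrak{h})$ a Hom-Lie triple system; $\theta_\mathcal{A}(u,v)(x)=[x,\mathcal{A}u,\mathcal{A}v]_\mathfrak{g}+\mathcal{A}(\theta(x,\mathcal{A}v)u-D(x,\mathcal{A}u)v)$ for $u,v\in\mathfrak{h}$, $x\in\mathfrak{g}$ defines a representation of it on $(\mathfrak{g},\alpha_\mathfrak{g})$, and $D_\mathcal{A}(u,v)=\theta_\mathcal{A}(v,u)-\theta_\mathcal{A}(u,v)$. *)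

theory Defs
  imports Main "HOL.Vector_Spaces"
begin

text \<open>Vector spaces over a field 'k of characteristic zero are modelled by a carrier type
  with additive group structure and an explicit scalar multiplication satisfying the
  Vector_Spaces locale vector_space.\<close>

definition trilinear ::
  "('k::field \<Rightarrow> 'a::ab_group_add \<Rightarrow> 'a) \<Rightarrow> ('k \<Rightarrow> 'b::ab_group_add \<Rightarrow> 'b) \<Rightarrow>
   ('a \<Rightarrow> 'a \<Rightarrow> 'a \<Rightarrow> 'b) \<Rightarrow> bool" where
  "trilinear s t br \<longleftrightarrow>
     (\<forall>y z. Vector_Spaces.linear s t (\<lambda>x. br x y z)) \<and>
     (\<forall>x z. Vector_Spaces.linear s t (\<lambda>y. br x y z)) \<and>
     (\<forall>x y. Vector_Spaces.linear s t (\<lambda>z. br x y z))"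

definition hom_LTS ::
  "('k::field \<Rightarrow> 'g::ab_group_add \<Rightarrow> 'g) \<Rightarrow> ('g \<Rightarrow> 'g \<Rightarrow> 'g \<Rightarrow> 'g) \<Rightarrow> ('g \<Rightarrow> 'g) \<Rightarrow> bool" where
  "hom_LTS s br \<alpha> \<longleftrightarrow>
     vector_space s \<and> trilinear s s br \<and> Vector_Spaces.linear s s \<alpha> \<and>
     (\<forall>x y z. \<alpha> (br x y z) = br (\<alpha> x) (\<alpha> y) (\<alpha> z)) \<and>
     (\<forall>x y z. br x y z + br y x z = 0) \<and>
     (\<forall>x y z. br x y z + br z x y + br y z x = 0) \<and>
     (\<forall>a b x y z. br (\<alpha> a) (\<alpha> b) (br x y z) =
         br (br a b x) (\<alpha> y) (\<alpha> z) + br (\<alpha> x) (br a b y) (\<alpha> z)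
         + br (\<alpha> x) (\<alpha> y) (br a b z))"

definition regular_hom_LTS ::
  "('k::field \<Rightarrow> 'g::ab_group_add \<Rightarrow> 'g) \<Rightarrow> ('g \<Rightarrow> 'g \<Rightarrow> 'g \<Rightarrow> 'g) \<Rightarrow> ('g \<Rightarrow> 'g) \<Rightarrow> bool" where
  "regular_hom_LTS s br \<alpha> \<longleftrightarrow> hom_LTS s br \<alpha> \<and> bij \<alpha>"

definition Dop :: "('g \<Rightarrow> 'g \<Rightarrow> 'v \<Rightarrow> 'v::ab_group_add) \<Rightarrow> 'g \<Rightarrow> 'g \<Rightarrow> 'v \<Rightarrow> 'v" where
  "Dop \<theta> x y = (\<lambda>v. \<theta> y x v - \<theta> x y v)"

definition hom_LTS_rep ::
  "('k::field \<Rightarrow> 'g::ab_group_add \<Rightarrow> 'g) \<Rightarrow> ('g \<Rightarrow> 'g \<Rightarrow> 'g \<Rightarrow> 'g) \<Rightarrow> ('g \<Rightarrow> 'g) \<Rightarrow>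
   ('k \<Rightarrow> 'v::ab_group_add \<Rightarrow> 'v) \<Rightarrow> ('v \<Rightarrow> 'v) \<Rightarrow> ('g \<Rightarrow> 'g \<Rightarrow> 'v \<Rightarrow> 'v) \<Rightarrow> bool" where
  "hom_LTS_rep s br \<alpha> sv \<beta> \<theta> \<longleftrightarrow>
     vector_space sv \<and> Vector_Spaces.linear sv sv \<beta> \<and>
     (\<forall>x y. Vector_Spaces.linear sv sv (\<theta> x y)) \<and>
     (\<forall>y v. Vector_Spaces.linear s sv (\<lambda>x. \<theta> x y v)) \<and>
     (\<forall>x v. Vector_Spaces.linear s sv (\<lambda>y. \<theta> x y v)) \<and>
     (\<forall>x y v. \<theta> (\<alpha> x) (\<alpha> y) (\<beta> v) = \<beta> (\<theta> x y v)) \<and>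
     (\<forall>a b x y v. \<theta> (\<alpha> a) (\<alpha> b) (\<theta> x y v)
        - \<theta> (\<alpha> y) (\<alpha> b) (\<theta> x a v)
        - \<theta> (\<alpha> x) (br y a b) (\<beta> v)
        + Dop \<theta> (\<alpha> y) (\<alpha> a) (\<theta> x b v) = 0) \<and>
     (\<forall>a b x y v. \<theta> (\<alpha> a) (\<alpha> b) (Dop \<theta> x y v)
        - Dop \<theta> (\<alpha> x) (\<alpha> y) (\<theta> a b v)
        + \<theta> (br x y a) (\<alpha> b) (\<beta> v)
        + \<theta> (\<alpha> a) (br x y b) (\<beta> v) = 0)"

text \<open>Action of g on the Hom-Lie triple system (h, brh, alpha_h). The second condition is
  the chain of equalities in the paper read literally: both equalities hold.\<close>
definition hom_LTS_action ::
  "('k::field \<Rightarrow> 'g::ab_group_add \<Rightarrow> 'g) \<Rightarrow> ('g \<Rightarrow> 'g \<Rightarrow> 'g \<Rightarrow> 'g) \<Rightarrow> ('g \<Rightarrow> 'g) \<Rightarrow>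
   ('k \<Rightarrow> 'h::ab_group_add \<Rightarrow> 'h) \<Rightarrow> ('h \<Rightarrow> 'h \<Rightarrow> 'h \<Rightarrow> 'h) \<Rightarrow> ('h \<Rightarrow> 'h) \<Rightarrow>
   ('g \<Rightarrow> 'g \<Rightarrow> 'h \<Rightarrow> 'h) \<Rightarrow> bool" where
  "hom_LTS_action s br \<alpha> sh brh \<alpha>h \<theta> \<longleftrightarrow>
     hom_LTS_rep s br \<alpha> sh \<alpha>h \<theta> \<and>
     (\<forall>x y u v w. \<theta> (\<alpha> x) (\<alpha> y) (brh u v w) =
        brh (\<theta> x y u) (\<alpha>h v) (\<alpha>h w) + brh (\<alpha>h u) (\<theta> x y v) (\<alpha>h w)
        + brh (\<alpha>h u) (\<alpha>h v) (\<theta> x y w)) \<and>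
     (\<forall>x y u v w. \<theta> (\<alpha> x) (\<alpha> y) (brh u v w) = brh (\<alpha>h u) (\<alpha>h v) (\<theta> x y w) \<and>
        brh (\<alpha>h u) (\<alpha>h v) (\<theta> x y w) = 0)"

definition Obr ::
  "('k::field \<Rightarrow> 'h::ab_group_add \<Rightarrow> 'h) \<Rightarrow> 'k \<Rightarrow> ('h \<Rightarrow> 'h \<Rightarrow> 'h \<Rightarrow> 'h) \<Rightarrow>
   ('g \<Rightarrow> 'g \<Rightarrow> 'h \<Rightarrow> 'h) \<Rightarrow> ('h \<Rightarrow> 'g) \<Rightarrow> 'h \<Rightarrow> 'h \<Rightarrow> 'h \<Rightarrow> 'h" where
  "Obr sh \<kappa> brh \<theta> A u v w =
     Dop \<theta> (A u) (A v) w - \<theta> (A u) (A w) v + \<theta> (A v) (A w) u + sh \<kappa> (brh u v w)"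

definition weighted_O_operator ::
  "('k::field \<Rightarrow> 'g::ab_group_add \<Rightarrow> 'g) \<Rightarrow> ('g \<Rightarrow> 'g \<Rightarrow> 'g \<Rightarrow> 'g) \<Rightarrow> ('g \<Rightarrow> 'g) \<Rightarrow>
   ('k \<Rightarrow> 'h::ab_group_add \<Rightarrow> 'h) \<Rightarrow> ('h \<Rightarrow> 'h \<Rightarrow> 'h \<Rightarrow> 'h) \<Rightarrow> ('h \<Rightarrow> 'h) \<Rightarrow>
   ('g \<Rightarrow> 'g \<Rightarrow> 'h \<Rightarrow> 'h) \<Rightarrow> 'k \<Rightarrow> ('h \<Rightarrow> 'g) \<Rightarrow> bool" where
  "weighted_O_operator s br \<alpha> sh brh \<alpha>h \<theta> \<kappa> A \<longleftrightarrow>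
     Vector_Spaces.linear sh s A \<and> A \<circ> \<alpha>h = \<alpha> \<circ> A \<and>
     (\<forall>u v w. br (A u) (A v) (A w) = A (Obr sh \<kappa> brh \<theta> A u v w))"

definition theta_A ::
  "('g \<Rightarrow> 'g \<Rightarrow> 'g \<Rightarrow> 'g::ab_group_add) \<Rightarrow> ('g \<Rightarrow> 'g \<Rightarrow> 'h \<Rightarrow> 'h::ab_group_add) \<Rightarrow> ('h \<Rightarrow> 'g) \<Rightarrow>
   'h \<Rightarrow> 'h \<Rightarrow> 'g \<Rightarrow> 'g" where
  "theta_A br \<theta> A u v = (\<lambda>x. br x (A u) (A v) + A (\<theta> x (A v) u - Dop \<theta> x (A u) v))"

definition D_A ::
  "('g \<Rightarrow> 'g \<Rightarrow> 'g \<Rightarrow> 'g::ab_group_add) \<Rightarrow> ('g \<Rightarrow> 'g \<Rightarrow> 'h \<Rightarrow> 'h::ab_group_add) \<Rightarrow> ('h \<Rightarrow> 'g) \<Rightarrow>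
   'h \<Rightarrow> 'h \<Rightarrow> 'g \<Rightarrow> 'g" where
  "D_A br \<theta> A u v = (\<lambda>x. theta_A br \<theta> A v u x - theta_A br \<theta> A u v x)"

definition Im_ab ::
  "('g \<Rightarrow> 'g \<Rightarrow> 'g \<Rightarrow> 'g::ab_group_add) \<Rightarrow> ('h \<Rightarrow> 'h) \<Rightarrow> ('g \<Rightarrow> 'g \<Rightarrow> 'h \<Rightarrow> 'h::ab_group_add) \<Rightarrow>
   ('h \<Rightarrow> 'g) \<Rightarrow> 'g \<Rightarrow> 'g \<Rightarrow> 'h \<Rightarrow> 'g" where
  "Im_ab br \<alpha>h \<theta> A a b = (\<lambda>v. A (Dop \<theta> a b (inv \<alpha>h v)) - br a b (A (inv \<alpha>h v)))"

end

theory Submission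
  imports Defs
begin

lemma addf_zero: fixes f :: "'a::ab_group_add \<Rightarrow> 'b::ab_group_add" assumes "\<And>x y. f (x + y) = f x + f y" shows "f 0 = (0::'b::ab_group_add)"
proof -
  have "f 0 = f 0 + f 0" using assms[of 0 0] by simp
  then show ?thesis by (metis add_cancel_right_right)
qed

lemma addf_diff: fixes f :: "'a::ab_group_add \<Rightarrow> 'b::ab_group_add" assumes "\<And>x y. f (x + y) = f x + f y"
  shows "f (x - y) = f x - (f y::'b::ab_group_add)"
proof -
  have "f x = f (x - y) + f y" using assms[of "x - y" y] by simp
  then show ?thesis by (simp add: algebra_simps)
qed

lemma lin_add: "Vector_Spaces.linear s t f \<Longrightarrow> f (x + y) = f x + f y"
  by (simp add: linear_iff)
lemma lin_scale: "Vector_Spaces.linear s t f \<Longrightarrow> f (s c x) = t c (f x)"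
  by (simp add: linear_iff)
lemma lin_diff: "Vector_Spaces.linear s t f \<Longrightarrow> f (x - y) = f x - f y"
  by (rule addf_diff, simp add: linear_iff)
lemma vs_add: "vector_space s \<Longrightarrow> s c (x + y) = s c x + s c y"
  by (simp add: vector_space.vector_space_assms(1))
lemma vs_diff: "vector_space s \<Longrightarrow> s c (x - y) = s c x - s c y"
  by (rule addf_diff[where f="s c"], simp add: vector_space.vector_space_assms(1))

theorem mainTheorem5:
  fixes s :: "'k::field_char_0 \<Rightarrow> 'g::ab_group_add \<Rightarrow> 'g"
    and sh :: "'k \<Rightarrow> 'h::ab_group_add \<Rightarrow> 'h"
    and br :: "'g \<Rightarrow> 'g \<Rightarrow> 'g \<Rightarrow> 'g" and \<alpha> :: "'g \<Rightarrow> 'g"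
    and brh :: "'h \<Rightarrow> 'h \<Rightarrow> 'h \<Rightarrow> 'h" and \<alpha>h :: "'h \<Rightarrow> 'h"
    and \<theta> :: "'g \<Rightarrow> 'g \<Rightarrow> 'h \<Rightarrow> 'h" and \<kappa> :: 'k and A :: "'h \<Rightarrow> 'g" and a b :: 'g
  assumes "regular_hom_LTS s br \<alpha>"
    and "regular_hom_LTS sh brh \<alpha>h"
    and "hom_LTS_action s br \<alpha> sh brh \<alpha>h \<theta>"
    and "weighted_O_operator s br \<alpha> sh brh \<alpha>h \<theta> \<kappa> A"
    and "\<alpha> a = a" and "\<alpha> b = b"
  shows "Vector_Spaces.linear sh s (Im_ab br \<alpha>h \<theta> A a b)
    \<and> \<alpha> \<circ> Im_ab br \<alpha>h \<theta> A a b = Im_ab br \<alpha>h \<theta> A a b \<circ> \<alpha>h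
    \<and> (\<forall>v1 v2 v3.
         theta_A br \<theta> A v2 v3 (Im_ab br \<alpha>h \<theta> A a b v1)
       - theta_A br \<theta> A v1 v3 (Im_ab br \<alpha>h \<theta> A a b v2)
       + D_A br \<theta> A v1 v2 (Im_ab br \<alpha>h \<theta> A a b v3)
       - Im_ab br \<alpha>h \<theta> A a b (Obr sh \<kappa> brh \<theta> A v1 v2 v3) = 0)"
proof -
  have hg: "hom_LTS s br \<alpha>" and b\<alpha>: "bij \<alpha>" using assms(1) unfolding regular_hom_LTS_def by auto
  have hh: "hom_LTS sh brh \<alpha>h" and b\<alpha>h: "bij \<alpha>h" using assms(2) unfolding regular_hom_LTS_def by auto
  have vs: "vector_space s" and tri: "trilinear s s br" and lin\<alpha>: "Vector_Spaces.linear s s \<alpha>"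
    and \<alpha>br: "\<And>x y z. \<alpha> (br x y z) = br (\<alpha> x) (\<alpha> y) (\<alpha> z)"
    and skew: "\<And>x y z. br x y z + br y x z = 0"
    and jac: "\<And>x y z. br x y z + br z x y + br y z x = 0"
    and der: "\<And>a b x y z. br (\<alpha> a) (\<alpha> b) (br x y z) =
         br (br a b x) (\<alpha> y) (\<alpha> z) + br (\<alpha> x) (br a b y) (\<alpha> z)
         + br (\<alpha> x) (\<alpha> y) (br a b z)"
    using hg unfolding hom_LTS_def by blast+
  have vsh: "vector_space sh" and trih: "trilinear sh sh brh" and lin\<alpha>h: "Vector_Spaces.linear sh sh \<alpha>h"
    and \<alpha>brh: "\<And>x y z. \<alpha>h (brh x y z) = brh (\<alpha>h x) (\<alpha>h y) (\<alpha>h z)"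
    using hh unfolding hom_LTS_def by blast+
  have rep: "hom_LTS_rep s br \<alpha> sh \<alpha>h \<theta>"
    and act1: "\<And>x y u v w. \<theta> (\<alpha> x) (\<alpha> y) (brh u v w) =
        brh (\<theta> x y u) (\<alpha>h v) (\<alpha>h w) + brh (\<alpha>h u) (\<theta> x y v) (\<alpha>h w)
        + brh (\<alpha>h u) (\<alpha>h v) (\<theta> x y w)"
    using assms(3) unfolding hom_LTS_action_def by blast+
  have lin\<theta>3: "\<And>x y. Vector_Spaces.linear sh sh (\<theta> x y)"
    and lin\<theta>1: "\<And>y v. Vector_Spaces.linear s sh (\<lambda>x. \<theta> x y v)"
    and lin\<theta>2: "\<And>x v. Vector_Spaces.linear s sh (\<lambda>y. \<theta> x y v)"
    and \<theta>\<alpha>: "\<And>x y v. \<theta> (\<alpha> x) (\<alpha> y) (\<alpha>h v) = \<alpha>h (\<theta> x y v)"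
    and rep3: "\<And>a b x y v. \<theta> (\<alpha> a) (\<alpha> b) (Dop \<theta> x y v)
        - Dop \<theta> (\<alpha> x) (\<alpha> y) (\<theta> a b v)
        + \<theta> (br x y a) (\<alpha> b) (\<alpha>h v)
        + \<theta> (\<alpha> a) (br x y b) (\<alpha>h v) = 0"
    using rep unfolding hom_LTS_rep_def by blast+
  have linA: "Vector_Spaces.linear sh s A" and A\<alpha>: "A \<circ> \<alpha>h = \<alpha> \<circ> A"
    and Oop: "\<And>u v w. br (A u) (A v) (A w) = A (Obr sh \<kappa> brh \<theta> A u v w)"
    using assms(4) unfolding weighted_O_operator_def by blast+
  have A\<alpha>': "\<And>u. A (\<alpha>h u) = \<alpha> (A u)" using A\<alpha> by (metis comp_apply)
  have tri1: "\<And>y z. Vector_Spaces.linear s s (\<lambda>x. br x y z)"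
    and tri2: "\<And>x z. Vector_Spaces.linear s s (\<lambda>y. br x y z)"
    and tri3: "\<And>x y. Vector_Spaces.linear s s (\<lambda>z. br x y z)"
    using tri unfolding trilinear_def by auto
  have trih1: "\<And>y z. Vector_Spaces.linear sh sh (\<lambda>x. brh x y z)"
    and trih2: "\<And>x z. Vector_Spaces.linear sh sh (\<lambda>y. brh x y z)"
    and trih3: "\<And>x y. Vector_Spaces.linear sh sh (\<lambda>z. brh x y z)"
    using trih unfolding trilinear_def by auto
  have br1: "\<And>x y z w. br (x + y) z w = br x z w + br y z w" using lin_add[OF tri1] by simp
  have br1d: "\<And>x y z w. br (x - y) z w = br x z w - br y z w" using lin_diff[OF tri1] by simp
  have br2: "\<And>x y z w. br z (x + y) w = br z x w + br z y w" using lin_add[OF tri2] by simp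
  have br2d: "\<And>x y z w. br z (x - y) w = br z x w - br z y w" using lin_diff[OF tri2] by simp
  have br3: "\<And>x y z w. br z w (x + y) = br z w x + br z w y" using lin_add[OF tri3] by simp
  have br3d: "\<And>x y z w. br z w (x - y) = br z w x - br z w y" using lin_diff[OF tri3] by simp
  have br3s: "\<And>x y c z. br x y (s c z) = s c (br x y z)" using lin_scale[OF tri3] by simp
  have brh1d: "\<And>x y z w. brh (x - y) z w = brh x z w - brh y z w" using lin_diff[OF trih1] by simp
  have brh2d: "\<And>x y z w. brh z (x - y) w = brh z x w - brh z y w" using lin_diff[OF trih2] by simp
  have brh3d: "\<And>x y z w. brh z w (x - y) = brh z w x - brh z w y" using lin_diff[OF trih3] by simp
  have \<theta>1: "\<And>x y z w. \<theta> (x + y) z w = \<theta> x z w + \<theta> y z w" using lin_add[OF lin\<theta>1] by simp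
  have \<theta>1d: "\<And>x y z w. \<theta> (x - y) z w = \<theta> x z w - \<theta> y z w" using lin_diff[OF lin\<theta>1] by simp
  have \<theta>2: "\<And>x y z w. \<theta> z (x + y) w = \<theta> z x w + \<theta> z y w" using lin_add[OF lin\<theta>2] by simp
  have \<theta>2d: "\<And>x y z w. \<theta> z (x - y) w = \<theta> z x w - \<theta> z y w" using lin_diff[OF lin\<theta>2] by simp
  have \<theta>3: "\<And>x y z w. \<theta> z w (x + y) = \<theta> z w x + \<theta> z w y" using lin_add[OF lin\<theta>3] by simp
  have \<theta>3d: "\<And>x y z w. \<theta> z w (x - y) = \<theta> z w x - \<theta> z w y" using lin_diff[OF lin\<theta>3] by simp
  have \<theta>3s: "\<And>x y c z. \<theta> x y (sh c z) = sh c (\<theta> x y z)" using lin_scale[OF lin\<theta>3] by simp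
  have A_add: "\<And>x y. A (x + y) = A x + A y" using lin_add[OF linA] by simp
  have A_diff: "\<And>x y. A (x - y) = A x - A y" using lin_diff[OF linA] by simp
  have A_s: "\<And>c x. A (sh c x) = s c (A x)" using lin_scale[OF linA] by simp
  have \<alpha>_diff: "\<And>x y. \<alpha> (x - y) = \<alpha> x - \<alpha> y" using lin\<alpha> by (rule lin_diff)
  have \<alpha>h_add: "\<And>x y. \<alpha>h (x + y) = \<alpha>h x + \<alpha>h y" using lin\<alpha>h by (rule lin_add)
  have \<alpha>h_diff: "\<And>x y. \<alpha>h (x - y) = \<alpha>h x - \<alpha>h y" using lin\<alpha>h by (rule lin_diff)
  have \<alpha>h_s: "\<And>c x. \<alpha>h (sh c x) = sh c (\<alpha>h x)" using lin\<alpha>h by (rule lin_scale)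
  have ig1: "\<And>x. \<alpha> (inv \<alpha> x) = x" using b\<alpha> by (simp add: bij_is_surj surj_f_inv_f)
  have ig2: "\<And>x. inv \<alpha> (\<alpha> x) = x" using b\<alpha> by (simp add: bij_is_inj)
  have ia1: "\<And>x. \<alpha>h (inv \<alpha>h x) = x" using b\<alpha>h by (simp add: bij_is_surj surj_f_inv_f)
  have ia2: "\<And>x. inv \<alpha>h (\<alpha>h x) = x" using b\<alpha>h by (simp add: bij_is_inj)
  have ia_add: "\<And>x y. inv \<alpha>h (x + y) = inv \<alpha>h x + inv \<alpha>h y"
    by (metis ia1 ia2 \<alpha>h_add)
  have ia_diff: "\<And>x y. inv \<alpha>h (x - y) = inv \<alpha>h x - inv \<alpha>h y"
    by (metis ia1 ia2 \<alpha>h_diff)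
  have ia_s: "\<And>c x. inv \<alpha>h (sh c x) = sh c (inv \<alpha>h x)"
    by (metis ia1 ia2 \<alpha>h_s)
  have A_ia: "\<And>u. A (inv \<alpha>h u) = inv \<alpha> (A u)"
    by (metis A\<alpha>' ia1 ig2)
  define M where "M = (\<lambda>u. \<theta> b a (inv \<alpha>h u) - \<theta> a b (inv \<alpha>h u))"
  define L where "L = (\<lambda>x. br a b (inv \<alpha> x))"
  define I where "I = Im_ab br \<alpha>h \<theta> A a b"
  have Im_eq: "\<And>v. I v = A (M v) - L (A v)"
    unfolding I_def Im_ab_def M_def L_def Dop_def by (simp add: A_ia)
  have M_add: "\<And>x y. M (x + y) = M x + M y" unfolding M_def by (simp add: ia_add \<theta>3)
  have M_diff: "\<And>x y. M (x - y) = M x - M y" unfolding M_def by (simp add: ia_diff \<theta>3d)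
  have M_s: "\<And>c x. M (sh c x) = sh c (M x)" unfolding M_def by (simp add: ia_s \<theta>3s vs_diff[OF vsh])
  have P1: "Vector_Spaces.linear sh s I"
    unfolding linear_iff
  proof (intro conjI allI)
    show "vector_space sh" by (rule vsh)
    show "vector_space s" by (rule vs)
    fix x y show "I (x + y) = I x + I y"
      unfolding I_def Im_ab_def Dop_def by (simp add: ia_add \<theta>3 A_add A_diff br3 br3d algebra_simps)
  next
    fix c x show "I (sh c x) = s c (I x)"
      unfolding I_def Im_ab_def Dop_def
      by (simp add: ia_s \<theta>3s A_s br3s vs_diff[OF vsh, symmetric] vs_diff[OF vs, symmetric])
  qed
  have \<alpha>M: "\<And>v. \<alpha>h (M v) = M (\<alpha>h v)"
    unfolding M_def by (simp add: \<alpha>h_diff \<theta>\<alpha>[symmetric] assms(5,6) ia1 ia2)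
  have \<alpha>L: "\<And>x. \<alpha> (L x) = L (\<alpha> x)"
    unfolding L_def by (simp add: \<alpha>br assms(5,6) ig1 ig2)
  have P2: "\<alpha> \<circ> I = I \<circ> \<alpha>h"
  proof
    fix v show "(\<alpha> \<circ> I) v = (I \<circ> \<alpha>h) v"
      by (simp add: Im_eq \<alpha>_diff A\<alpha>'[symmetric] \<alpha>M \<alpha>L)
  qed
  have F1: "\<And>x y z. L (br x y z) = br (L x) y z + br x (L y) z + br x y (L z)"
  proof -
    fix x y z
    have e: "inv \<alpha> (br x y z) = br (inv \<alpha> x) (inv \<alpha> y) (inv \<alpha> z)"
    proof -
      have "\<alpha> (br (inv \<alpha> x) (inv \<alpha> y) (inv \<alpha> z)) = br x y z" by (simp add: \<alpha>br ig1)
      then show ?thesis using ig2 by metis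
    qed
    show "?thesis x y z"
      unfolding L_def e using der[of a b "inv \<alpha> x" "inv \<alpha> y" "inv \<alpha> z"]
      by (simp add: assms(5,6) ig1)
  qed
  have F2: "\<And>p q u. M (\<theta> p q u) = \<theta> p q (M u) + \<theta> (L p) q u + \<theta> p (L q) u"
  proof -
    fix p q u
    have e: "inv \<alpha>h (\<theta> p q u) = \<theta> (inv \<alpha> p) (inv \<alpha> q) (inv \<alpha>h u)"
    proof -
      have "\<alpha>h (\<theta> (inv \<alpha> p) (inv \<alpha> q) (inv \<alpha>h u)) = \<theta> p q u" by (simp add: \<theta>\<alpha>[symmetric] ig1 ia1)
      then show ?thesis using ia2 by metis
    qed
    have r: "\<theta> p q (Dop \<theta> a b (inv \<alpha>h u)) - Dop \<theta> a b (\<theta> (inv \<alpha> p) (inv \<alpha> q) (inv \<alpha>h u))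
        + \<theta> (br a b (inv \<alpha> p)) q u + \<theta> p (br a b (inv \<alpha> q)) u = 0"
      using rep3[of "inv \<alpha> p" "inv \<alpha> q" a b "inv \<alpha>h u"] by (simp add: assms(5,6) ig1 ia1)
    show "?thesis p q u"
      using r unfolding M_def L_def e Dop_def by (simp add: algebra_simps)
  qed
  have K0: "\<And>v1 v2 v3. brh (M v1) v2 v3 + brh v1 (M v2) v3 + brh v1 v2 (M v3) = M (brh v1 v2 v3)"
  proof -
    fix v1 v2 v3
    have e: "inv \<alpha>h (brh v1 v2 v3) = brh (inv \<alpha>h v1) (inv \<alpha>h v2) (inv \<alpha>h v3)"
    proof -
      have "\<alpha>h (brh (inv \<alpha>h v1) (inv \<alpha>h v2) (inv \<alpha>h v3)) = brh v1 v2 v3" by (simp add: \<alpha>brh ia1)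
      then show ?thesis using ia2 by metis
    qed
    show "?thesis v1 v2 v3"
      using act1[of a b "inv \<alpha>h v1" "inv \<alpha>h v2" "inv \<alpha>h v3"]
        act1[of b a "inv \<alpha>h v1" "inv \<alpha>h v2" "inv \<alpha>h v3"]
      unfolding M_def e by (simp add: assms(5,6) ia1 brh1d brh2d brh3d algebra_simps)
  qed
  have K: "\<And>v1 v2 v3. M (sh \<kappa> (brh v1 v2 v3)) = sh \<kappa> (brh (M v1) v2 v3)
      + sh \<kappa> (brh v1 (M v2) v3) + sh \<kappa> (brh v1 v2 (M v3))"
    by (simp add: M_s K0[symmetric] vs_add[OF vsh])
  have P3: "\<And>v1 v2 v3. theta_A br \<theta> A v2 v3 (I v1) - theta_A br \<theta> A v1 v3 (I v2)
       + D_A br \<theta> A v1 v2 (I v3) - I (Obr sh \<kappa> brh \<theta> A v1 v2 v3) = 0"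
  proof -
    fix v1 v2 v3
    define Ob where "Ob = Obr sh \<kappa> brh \<theta> A v1 v2 v3"
    define LL where "LL = (\<lambda>B::'h\<Rightarrow>'g. br (B v1) (A v2) (A v3) + br (A v1) (B v2) (A v3) + br (A v1) (A v2) (B v3))"
    define Th where "Th = (\<lambda>B::'h\<Rightarrow>'g. Dop \<theta> (B v1) (A v2) v3 + Dop \<theta> (A v1) (B v2) v3
       - \<theta> (B v1) (A v3) v2 - \<theta> (A v1) (B v3) v2 + \<theta> (B v2) (A v3) v1 + \<theta> (A v2) (B v3) v1)"
    define AM where "AM = (\<lambda>v. A (M v))"
    define LA where "LA = (\<lambda>v. L (A v))"
    have s1: "br (I v2) (A v1) (A v3) = - br (A v1) (I v2) (A v3)"
      using skew[of "I v2" "A v1" "A v3"] by (simp add: eq_neg_iff_add_eq_0)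
    have z1: "br (I v3) (A v2) (A v1) = - br (A v2) (I v3) (A v1)"
      using skew[of "I v3" "A v2" "A v1"] by (simp add: eq_neg_iff_add_eq_0)
    have z2: "br (A v2) (I v3) (A v1) = - (br (A v1) (A v2) (I v3) + br (I v3) (A v1) (A v2))"
      using jac[of "A v1" "A v2" "I v3"] by (simp add: eq_neg_iff_add_eq_0 algebra_simps)
    have s2: "br (I v3) (A v2) (A v1) = br (A v1) (A v2) (I v3) + br (I v3) (A v1) (A v2)"
      using z1 z2 by simp
    have S1: "theta_A br \<theta> A v2 v3 (I v1) - theta_A br \<theta> A v1 v3 (I v2)
       + D_A br \<theta> A v1 v2 (I v3) - I Ob = LL I - A (Th I) - I Ob"
      unfolding theta_A_def D_A_def LL_def Th_def Dop_def
      by (simp add: A_add A_diff s1 s2 algebra_simps)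
    have S2a: "LL I = LL AM - LL LA"
      unfolding LL_def AM_def LA_def by (simp add: Im_eq br1d br2d br3d algebra_simps)
    have S2b: "Th I = Th AM - Th LA"
      unfolding Th_def AM_def LA_def Dop_def by (simp add: Im_eq \<theta>1d \<theta>2d algebra_simps)
    have S3a: "L (br (A v1) (A v2) (A v3)) = LL LA"
      unfolding LL_def LA_def by (rule F1)
    have S3: "LL LA = L (A Ob)" using S3a Oop[of v1 v2 v3] unfolding Ob_def by simp
    have S4: "LL AM = A (Obr sh \<kappa> brh \<theta> A (M v1) v2 v3 + Obr sh \<kappa> brh \<theta> A v1 (M v2) v3
        + Obr sh \<kappa> brh \<theta> A v1 v2 (M v3))"
      unfolding LL_def AM_def by (simp add: Oop A_add)
    have S5: "Obr sh \<kappa> brh \<theta> A (M v1) v2 v3 + Obr sh \<kappa> brh \<theta> A v1 (M v2) v3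
        + Obr sh \<kappa> brh \<theta> A v1 v2 (M v3) = Th AM + M Ob - Th LA"
      unfolding Obr_def Th_def AM_def LA_def Ob_def Dop_def
      by (simp add: M_add M_diff F2 K algebra_simps)
    have "theta_A br \<theta> A v2 v3 (I v1) - theta_A br \<theta> A v1 v3 (I v2)
       + D_A br \<theta> A v1 v2 (I v3) - I Ob
       = LL AM - LL LA - A (Th AM - Th LA) - (A (M Ob) - L (A Ob))"
      using S1 S2a S2b Im_eq[of Ob] by simp
    also have "\<dots> = A (Obr sh \<kappa> brh \<theta> A (M v1) v2 v3 + Obr sh \<kappa> brh \<theta> A v1 (M v2) v3
        + Obr sh \<kappa> brh \<theta> A v1 v2 (M v3)) - A (Th AM) + A (Th LA) - A (M Ob)"
      unfolding S3 S4 by (simp add: A_diff algebra_simps)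
    also have "\<dots> = 0" unfolding S5 by (simp add: A_add A_diff)
    finally show "?thesis v1 v2 v3" unfolding Ob_def .
  qed
  show ?thesis using P1 P2 P3 unfolding I_def by blast
qed

end
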